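(* Let $n\ge1$ and let $(P_n,A_n,\lambda)$ be the Gelfand–Tsetlin marked poset with marking $\lambda_0\ge\lambda_1\ge\cdots\ge\lambda_n$. Then: (1) if $\lambda_0>\lambda_1>\cdots>\lambda_n$, then $(P_n,A_n,\lambda)$ is a regular marked poset; (2) $\operatorname{St}(P_n)=\{p_{i,j}: 1\le i<j<n\}$.
   Context: $P_n$ is the poset on $\{p_{i,j}: 0\le i\le j\le n\}$ whose cover relations are exactly $p_{i-1,j}\to p_{i,j}\to p_{i-1,j-1}$ for $1\le i\le j\le n$, where $q\to p$ means $p$ covers $q$ (i.e. $q\prec p$ with nothing strictly between). $A_n=\{p_{0,0},p_{0,1},\dots,p_{0,n}\}$, and the marking $\lambda:A_n\to\mathbb{Z}_{\ge0}$ is $\lambda(p_{0,k})=\lambda_k$. For $p\in P$, let $p\to$ denote the set of elements covering $p$ and $\rightsquigarrow p$ the set of maximal chains ending in $p$, i.e. chains $r_0\to\cdots\to r_k=p$ with $r_0$ minimal. $p$ is a star element if $|p\to|\ge2$ and $|\rightsquigarrow p|\ge2$; $\operatorname{St}(P)$ is the set of star elements. A marked poset $(P,A,\lambda)$ ($A$ containing all extremal elements, $\lambda:A\to\mathbb{Z}_{\ge0}$) is regular if: (1) there are no $a,b\in A$ with $a\to b$; (2) $\lambda_a\ne\lambda_b$ for $a\ne b\in A$; (3) if $a\in A$, $x\in P\setminus A$, $a\to x$, there is no $b\in A$ with $b\prec x$ and $\lambda_a<\lambda_b$; (4) if $a\in A$, $x\in P\setminus A$, $x\to a$, there is no $b\in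 A$ with $x\prec b$ and $\lambda_b<\lambda_a$. *)

theory Defs
  imports Main
begin

text \<open>A finite poset is given by a carrier P and its cover relation cov,
  where cov q p means that p covers q (written q \<rightarrow> p in the paper).\<close>

definition strict_less :: "('a \<Rightarrow> 'a \<Rightarrow> bool) \<Rightarrow> 'a \<Rightarrow> 'a \<Rightarrow> bool" where
  "strict_less cov = cov\<^sup>+\<^sup>+"

definition is_minimal :: "'a set \<Rightarrow> ('a \<Rightarrow> 'a \<Rightarrow> bool) \<Rightarrow> 'a \<Rightarrow> bool" where
  "is_minimal P cov x \<longleftrightarrow> x \<in> P \<and> \<not> (\<exists>q\<in>P. strict_less cov q x)"

definition is_maximal :: "'a set \<Rightarrow> ('a \<Rightarrow> 'a \<Rightarrow> bool) \<Rightarrow> 'a \<Rightarrow> bool" where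
  "is_maximal P cov x \<longleftrightarrow> x \<in> P \<and> \<not> (\<exists>q\<in>P. strict_less cov x q)"

definition covering_set :: "'a set \<Rightarrow> ('a \<Rightarrow> 'a \<Rightarrow> bool) \<Rightarrow> 'a \<Rightarrow> 'a set" where
  "covering_set P cov p = {q \<in> P. cov p q}"

definition chains_to :: "'a set \<Rightarrow> ('a \<Rightarrow> 'a \<Rightarrow> bool) \<Rightarrow> 'a \<Rightarrow> 'a list set" where
  "chains_to P cov p = {rs. rs \<noteq> [] \<and> set rs \<subseteq> P \<and> last rs = p \<and>
      (\<forall>i. Suc i < length rs \<longrightarrow> cov (rs ! i) (rs ! Suc i)) \<and> is_minimal P cov (hd rs)}"

definition star_elements :: "'a set \<Rightarrow> ('a \<Rightarrow> 'a \<Rightarrow> bool) \<Rightarrow> 'a set" where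
  "star_elements P cov = {p \<in> P. card (covering_set P cov p) \<ge> 2 \<and> card (chains_to P cov p) \<ge> 2}"

definition regular_marked_poset ::
  "'a set \<Rightarrow> ('a \<Rightarrow> 'a \<Rightarrow> bool) \<Rightarrow> 'a set \<Rightarrow> ('a \<Rightarrow> nat) \<Rightarrow> bool" where
  "regular_marked_poset P cov A lam \<longleftrightarrow>
     A \<subseteq> P \<and> {x \<in> P. is_minimal P cov x \<or> is_maximal P cov x} \<subseteq> A \<and>
     \<not> (\<exists>a\<in>A. \<exists>b\<in>A. cov a b) \<and>
     (\<forall>a\<in>A. \<forall>b\<in>A. a \<noteq> b \<longrightarrow> lam a \<noteq> lam b) \<and>
     (\<forall>a\<in>A. \<forall>x\<in>P - A. cov a x \<longrightarrow>
        \<not> (\<exists>b\<in>A. strict_less cov b x \<and> lam a < lam b)) \<and>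
     (\<forall>a\<in>A. \<forall>x\<in>P - A. cov x a \<longrightarrow>
        \<not> (\<exists>b\<in>A. strict_less cov x b \<and> lam b < lam a))"

text \<open>p_{i,j} is represented by the pair (i, j).\<close>
definition GT_P :: "nat \<Rightarrow> (nat \<times> nat) set" where
  "GT_P n = {(i, j). i \<le> j \<and> j \<le> n}"

definition GT_cov :: "nat \<Rightarrow> nat \<times> nat \<Rightarrow> nat \<times> nat \<Rightarrow> bool" where
  "GT_cov n q p \<longleftrightarrow> (\<exists>i j. 1 \<le> i \<and> i \<le> j \<and> j \<le> n \<and>
      ((q = (i - 1, j) \<and> p = (i, j)) \<or> (q = (i, j) \<and> p = (i - 1, j - 1))))"

definition GT_A :: "nat \<Rightarrow> (nat \<times> nat) set" where
  "GT_A n = {(0, k) | k. k \<le> n}"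

text \<open>Marking lam(p_{0,k}) = lam_k (only its values on GT_A matter).\<close>
definition GT_mark :: "(nat \<Rightarrow> nat) \<Rightarrow> nat \<times> nat \<Rightarrow> nat" where
  "GT_mark lam p = lam (snd p)"

end

theory Submission
  imports Defs
begin

definition rk :: "nat \<times> nat \<Rightarrow> int" where
  "rk p = int (fst p) - 2 * int (snd p)"

lemma cov_inv:
  assumes "GT_cov n q p"
  shows "q \<in> GT_P n \<and> p \<in> GT_P n \<and> snd p \<le> snd q \<and>
         int (snd p) - int (fst p) \<le> int (snd q) - int (fst q) \<and> rk p = rk q + 1"
  using assms unfolding GT_cov_def GT_P_def rk_def by auto

lemma sl_inv:
  assumes "strict_less (GT_cov n) q p"
  shows "snd p \<le> snd q \<and> int (snd p) - int (fst p) \<le> int (snd q) - int (fst q) \<and> rk q < rk p"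
  using assms unfolding strict_less_def
proof (induction rule: tranclp_induct)
  case (base y) then show ?case using cov_inv[OF base] by auto
next
  case (step y z) then show ?case using cov_inv[OF step(2)] by auto
qed

lemma covU: "Suc i \<le> j \<Longrightarrow> j \<le> n \<Longrightarrow> GT_cov n (i, j) (Suc i, j)"
  unfolding GT_cov_def by (rule exI[of _ "Suc i"], rule exI[of _ j]) auto

lemma covD: "i \<le> j \<Longrightarrow> Suc j \<le> n \<Longrightarrow> GT_cov n (Suc i, Suc j) (i, j)"
  unfolding GT_cov_def by (rule exI[of _ "Suc i"], rule exI[of _ "Suc j"]) auto

lemma rk_P: "p \<in> GT_P n \<Longrightarrow> - 2 * int n \<le> rk p \<and> rk p \<le> 0"
  unfolding GT_P_def rk_def by auto

lemma finite_P: "finite (GT_P n)"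
proof -
  have "GT_P n \<subseteq> {0..n} \<times> {0..n}" unfolding GT_P_def by auto
  then show ?thesis by (rule finite_subset) auto
qed

lemma minimal_iff: "is_minimal (GT_P n) (GT_cov n) x \<longleftrightarrow> x = (0, n)"
proof
  assume m: "is_minimal (GT_P n) (GT_cov n) x"
  obtain a b where x: "x = (a, b)" by fastforce
  have xP: "x \<in> GT_P n" using m unfolding is_minimal_def by auto
  have a0: "a = 0"
  proof (rule ccontr)
    assume "a \<noteq> 0"
    then obtain a' where a': "a = Suc a'" by (cases a) auto
    have "GT_cov n (a', b) (a, b)" using xP x a' by (auto intro!: covU simp: GT_P_def)
    moreover have "(a', b) \<in> GT_P n" using xP x a' by (auto simp: GT_P_def)
    ultimately show False using m x unfolding is_minimal_def strict_less_def by auto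
  qed
  have "b = n"
  proof (rule ccontr)
    assume "b \<noteq> n"
    then have "Suc b \<le> n" using xP x by (auto simp: GT_P_def)
    then have "GT_cov n (Suc 0, Suc b) (0, b)" by (intro covD) auto
    moreover have "(Suc 0, Suc b) \<in> GT_P n" using \<open>Suc b \<le> n\<close> by (auto simp: GT_P_def)
    ultimately show False using m x a0 unfolding is_minimal_def strict_less_def by auto
  qed
  then show "x = (0, n)" using x a0 by simp
next
  assume x: "x = (0, n)"
  have "\<not> strict_less (GT_cov n) q x" if "q \<in> GT_P n" for q
    using sl_inv[of n q x] rk_P[OF that] x by (auto simp: rk_def)
  then show "is_minimal (GT_P n) (GT_cov n) x" using x unfolding is_minimal_def GT_P_def by auto
qed

lemma maximal_fst: "is_maximal (GT_P n) (GT_cov n) x \<Longrightarrow> fst x = 0"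
proof (rule ccontr)
  assume m: "is_maximal (GT_P n) (GT_cov n) x" and ne: "fst x \<noteq> 0"
  obtain a b where x: "x = (a, b)" by fastforce
  have xP: "x \<in> GT_P n" using m unfolding is_maximal_def by auto
  obtain a' where a': "a = Suc a'" using ne x by (cases a) auto
  obtain b' where b': "b = Suc b'" using xP x a' by (cases b) (auto simp: GT_P_def)
  have "GT_cov n (a, b) (a', b')" using xP x a' b' by (auto intro!: covD simp: GT_P_def)
  moreover have "(a', b') \<in> GT_P n" using xP x a' b' by (auto simp: GT_P_def)
  ultimately show False using m x unfolding is_maximal_def strict_less_def by auto
qed

lemma chain_rk:
  assumes "rs \<in> chains_to (GT_P n) (GT_cov n) p"
  shows "k < length rs \<Longrightarrow> rk (rs ! k) = - 2 * int n + int k"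
proof (induction k)
  case 0
  have ne: "rs \<noteq> []" and h: "is_minimal (GT_P n) (GT_cov n) (hd rs)"
    using assms unfolding chains_to_def by auto
  have "hd rs = (0, n)" using h minimal_iff by blast
  then have "rs ! 0 = (0, n)" using ne by (simp add: hd_conv_nth)
  then show ?case by (simp add: rk_def)
next
  case (Suc k)
  have "GT_cov n (rs ! k) (rs ! Suc k)" using Suc.prems assms unfolding chains_to_def by blast
  then have "rk (rs ! Suc k) = rk (rs ! k) + 1" using cov_inv by blast
  moreover have "rk (rs ! k) = - 2 * int n + int k" using Suc.IH Suc.prems by simp
  ultimately show ?case by simp
qed

lemma chain_len:
  assumes "rs \<in> chains_to (GT_P n) (GT_cov n) p"
  shows "length rs \<le> 2 * n + 1"
proof (rule ccontr)
  assume "\<not> ?thesis"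
  then have l: "2 * n + 1 < length rs" by simp
  have "set rs \<subseteq> GT_P n" using assms unfolding chains_to_def by blast
  then have "rs ! (2*n+1) \<in> GT_P n" using nth_mem[OF l] by blast
  from rk_P[OF this] chain_rk[OF assms l] show False by simp
qed

lemma finite_chains: "finite (chains_to (GT_P n) (GT_cov n) p)"
proof -
  have "chains_to (GT_P n) (GT_cov n) p \<subseteq> {rs. set rs \<subseteq> GT_P n \<and> length rs \<le> 2 * n + 1}"
    using chain_len unfolding chains_to_def by blast
  then show ?thesis using finite_lists_length_le[OF finite_P] finite_subset by blast
qed


lemma chain_snd_mono:
  assumes "rs \<in> chains_to (GT_P n) (GT_cov n) p" and "k \<le> l" and "l < length rs"
  shows "snd (rs ! l) \<le> snd (rs ! k)"
  using assms(2,3)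
proof (induction l rule: dec_induct)
  case base then show ?case by simp
next
  case (step m)
  have "GT_cov n (rs ! m) (rs ! Suc m)" using step.prems assms(1) unfolding chains_to_def by blast
  then have "snd (rs ! Suc m) \<le> snd (rs ! m)" using cov_inv by blast
  with step show ?case by simp
qed

lemma chains_n:
  assumes rs: "rs \<in> chains_to (GT_P n) (GT_cov n) (i, n)"
  shows "rs = map (\<lambda>k. (k, n)) [0..<Suc i]"
proof -
  have ne: "rs \<noteq> []" and sP: "set rs \<subseteq> GT_P n" and la: "last rs = (i, n)"
    using rs unfolding chains_to_def by auto
  have nth: "rs ! k = (k, n)" if k: "k < length rs" for k
  proof -
    have "rs ! k \<in> GT_P n" using sP nth_mem[OF k] by blast
    then have le: "snd (rs ! k) \<le> n" unfolding GT_P_def by auto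
    have "last rs = rs ! (length rs - 1)" using ne by (simp add: last_conv_nth)
    then have "snd (rs ! (length rs - 1)) = n" using la by (metis snd_conv)
    moreover have "snd (rs ! (length rs - 1)) \<le> snd (rs ! k)"
      using chain_snd_mono[OF rs, of k "length rs - 1"] k by simp
    ultimately have sn: "snd (rs ! k) = n" using le by simp
    have "rk (rs ! k) = - 2 * int n + int k" using chain_rk[OF rs k] .
    then have "fst (rs ! k) = k" using sn by (simp add: rk_def)
    then show ?thesis using sn by (metis prod.collapse)
  qed
  have "last rs = rs ! (length rs - 1)" using ne by (simp add: last_conv_nth)
  also have "\<dots> = (length rs - 1, n)" using ne by (intro nth) simp
  finally have "length rs = Suc i" using la ne by (cases "length rs") auto
  then show ?thesis by (intro nth_equalityI) (auto simp: nth simp del: upt_Suc)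
qed

lemma chains_n_card: "card (chains_to (GT_P n) (GT_cov n) (i, n)) \<le> 1"
proof -
  have "chains_to (GT_P n) (GT_cov n) (i, n) \<subseteq> {map (\<lambda>k. (k, n)) [0..<Suc i]}"
    using chains_n by blast
  from card_mono[OF _ this] show ?thesis by simp
qed

lemma cov_set_sub: "covering_set (GT_P n) (GT_cov n) (i, j) \<subseteq>
   (if i < j then {(Suc i, j)} else {}) \<union> (if 1 \<le> i then {(i - 1, j - 1)} else {})"
proof
  fix p assume "p \<in> covering_set (GT_P n) (GT_cov n) (i, j)"
  then obtain a b where ab: "1 \<le> a" "a \<le> b" "b \<le> n"
    "((i, j) = (a - 1, b) \<and> p = (a, b)) \<or> ((i, j) = (a, b) \<and> p = (a - 1, b - 1))"
    unfolding covering_set_def GT_cov_def by blast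
  then show "p \<in> (if i < j then {(Suc i, j)} else {}) \<union> (if 1 \<le> i then {(i - 1, j - 1)} else {})"
  proof (elim disjE conjE)
    assume "(i, j) = (a - 1, b)" "p = (a, b)"
    then show ?thesis using ab by auto
  next
    assume "(i, j) = (a, b)" "p = (a - 1, b - 1)"
    then show ?thesis using ab by auto
  qed
qed


lemma chain_of_fun:
  assumes "f 0 = (0, n)" "\<And>k. k \<le> L \<Longrightarrow> f k \<in> GT_P n"
    "\<And>k. k < L \<Longrightarrow> GT_cov n (f k) (f (Suc k))" "f L = p"
  shows "map f [0..<Suc L] \<in> chains_to (GT_P n) (GT_cov n) p"
  unfolding chains_to_def
proof (intro CollectI conjI allI impI)
  show "map f [0..<Suc L] \<noteq> []" by simp
  show "set (map f [0..<Suc L]) \<subseteq> GT_P n" using assms(2) by auto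
  show "last (map f [0..<Suc L]) = p" using assms(4) by (simp del: upt_Suc add: last_map)
  show "is_minimal (GT_P n) (GT_cov n) (hd (map f [0..<Suc L]))"
    using assms(1) minimal_iff by (simp del: upt_Suc add: hd_map)
  fix i assume "Suc i < length (map f [0..<Suc L])"
  then show "GT_cov n (map f [0..<Suc L] ! i) (map f [0..<Suc L] ! Suc i)"
    using assms(3) by (simp del: upt_Suc add: nth_map_upt)
qed

lemma two_chains:
  assumes "1 \<le> i" "i < j" "j < n"
  shows "card (chains_to (GT_P n) (GT_cov n) (i, j)) \<ge> 2"
proof -
  define u where "u = i + n - j"
  define L where "L = u + (n - j)"
  have u2: "2 \<le> u" and un: "u \<le> n" using assms by (auto simp: u_def)
  define g1 where "g1 k = (if k \<le> u then (k, n) else (2*u - k, n + u - k))" for k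
  define g2 where "g2 k = (if k < u then (k, n) else if k = u then (u - 2, n - 1)
      else (2*u - k, n + u - k))" for k
  have tail_P: "(2*u - k, n + u - k) \<in> GT_P n" if "u \<le> k" "k \<le> L" for k
    using that assms unfolding GT_P_def u_def L_def by auto
  have tail_cov: "GT_cov n (2*u - k, n + u - k) (2*u - Suc k, n + u - Suc k)"
    if "u \<le> k" "k < L" for k
  proof -
    have e: "(2*u - k, n + u - k) = (Suc (2*u - Suc k), Suc (n + u - Suc k))"
      using that assms unfolding u_def L_def by auto
    show ?thesis unfolding e
      by (rule covD) (use that assms in \<open>auto simp: u_def L_def\<close>)
  qed
  have last: "(2*u - L, n + u - L) = (i, j)" using assms unfolding u_def L_def by auto
  have Lu: "u < L" using assms by (simp add: L_def)
  have c1: "map g1 [0..<Suc L] \<in> chains_to (GT_P n) (GT_cov n) (i, j)"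
  proof (rule chain_of_fun)
    show "g1 0 = (0, n)" by (simp add: g1_def)
    show "g1 L = (i, j)" using last Lu by (simp add: g1_def)
    fix k
    show "k \<le> L \<Longrightarrow> g1 k \<in> GT_P n" using tail_P un by (auto simp: g1_def GT_P_def)
    assume k: "k < L"
    show "GT_cov n (g1 k) (g1 (Suc k))"
    proof (cases "Suc k \<le> u")
      case True then show ?thesis using un by (simp add: g1_def covU)
    next
      case False
      show ?thesis
      proof (cases "k = u")
        case True
        have "GT_cov n (2*u - u, n + u - u) (2*u - Suc u, n + u - Suc u)"
          using tail_cov[of u] k True by simp
        then show ?thesis using True by (simp add: g1_def)
      next
        case False
        then show ?thesis using \<open>\<not> Suc k \<le> u\<close> tail_cov[of k] k by (simp add: g1_def)
      qed
    qed
  qed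
  have c2: "map g2 [0..<Suc L] \<in> chains_to (GT_P n) (GT_cov n) (i, j)"
  proof (rule chain_of_fun)
    show "g2 0 = (0, n)" using u2 by (simp add: g2_def)
    show "g2 L = (i, j)" using last Lu by (simp add: g2_def)
    fix k
    show "k \<le> L \<Longrightarrow> g2 k \<in> GT_P n" using tail_P un u2 assms by (auto simp: g2_def GT_P_def)
    assume k: "k < L"
    show "GT_cov n (g2 k) (g2 (Suc k))"
    proof -
      consider "Suc k < u" | "Suc k = u" | "k = u" | "u < k" by linarith
      then show ?thesis
      proof cases
        case 1 then show ?thesis using un by (simp add: g2_def covU)
      next
        case 2
        have e1: "g2 k = (Suc (u - 2), Suc (n - 1))" using 2 u2 un by (simp add: g2_def)
        have e2: "g2 (Suc k) = (u - 2, n - 1)" using 2 by (simp add: g2_def)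
        show ?thesis unfolding e1 e2 by (rule covD) (use u2 un assms in auto)
      next
        case 3
        have e1: "g2 k = (u - 2, n - 1)" using 3 by (simp add: g2_def)
        have e2: "g2 (Suc k) = (Suc (u - 2), n - 1)" using 3 u2 by (simp add: g2_def)
        show ?thesis unfolding e1 e2 by (rule covU) (use u2 un assms in auto)
      next
        case 4 then show ?thesis using tail_cov[of k] k by (simp add: g2_def)
      qed
    qed
  qed
  have "map g1 [0..<Suc L] ! u \<noteq> map g2 [0..<Suc L] ! u"
  proof -
    have "u < Suc L" by (simp add: L_def)
    then show ?thesis using u2 by (auto simp del: upt_Suc simp add: g1_def g2_def)
  qed
  then have "map g1 [0..<Suc L] \<noteq> map g2 [0..<Suc L]" by metis
  then have "card {map g1 [0..<Suc L], map g2 [0..<Suc L]} = 2" by simp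
  moreover have "{map g1 [0..<Suc L], map g2 [0..<Suc L]} \<subseteq> chains_to (GT_P n) (GT_cov n) (i, j)"
    using c1 c2 by blast
  ultimately show ?thesis using card_mono[OF finite_chains] by metis
qed


lemma lam_anti:
  fixes lam :: "nat \<Rightarrow> nat"
  assumes "\<forall>k < n. lam (Suc k) \<le> lam k" "k \<le> m" "m \<le> n"
  shows "lam m \<le> lam k"
  using assms(2,3)
proof (induction m rule: dec_induct)
  case base show ?case by simp
next
  case (step m)
  have "m < n" using step.prems by simp
  then have "lam (Suc m) \<le> lam m" using assms(1) by blast
  moreover have "lam m \<le> lam k" using step.IH \<open>m < n\<close> by simp
  ultimately show ?case by (rule order_trans)
qed

lemma lam_strict:
  fixes lam :: "nat \<Rightarrow> nat"
  assumes "\<forall>k < n. lam (Suc k) < lam k" "k < m" "m \<le> n"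
  shows "lam m < lam k"
proof -
  have a: "\<forall>k < n. lam (Suc k) \<le> lam k" using assms(1) by (simp add: order_less_imp_le)
  obtain m' where m: "m = Suc m'" using assms(2) by (cases m) auto
  have "lam m' \<le> lam k" using lam_anti[OF a, of k m'] assms m by simp
  moreover have "lam m < lam m'" using assms(1) assms(3) m by simp
  ultimately show ?thesis by simp
qed

lemma star_char:
  "star_elements (GT_P n) (GT_cov n) = {(i, j). 1 \<le> i \<and> i < j \<and> j < n}"
proof
  show "star_elements (GT_P n) (GT_cov n) \<subseteq> {(i, j). 1 \<le> i \<and> i < j \<and> j < n}"
  proof
    fix p assume p: "p \<in> star_elements (GT_P n) (GT_cov n)"
    obtain i j where ij: "p = (i, j)" by fastforce
    have P: "p \<in> GT_P n" and c1: "card (covering_set (GT_P n) (GT_cov n) p) \<ge> 2"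
      and c2: "card (chains_to (GT_P n) (GT_cov n) p) \<ge> 2"
      using p unfolding star_elements_def by auto
    have fin: "finite ((if i < j then {(Suc i, j)} else {}) \<union> (if 1 \<le> i then {(i - 1, j - 1)} else {}))"
      by simp
    have "card (covering_set (GT_P n) (GT_cov n) p) \<le>
        card ((if i < j then {(Suc i, j)} else {}) \<union> (if 1 \<le> i then {(i - 1, j - 1)} else {}))"
      using card_mono[OF fin cov_set_sub[of n i j]] ij by simp
    also have "\<dots> \<le> card (if i < j then {(Suc i, j)} else {}) + card (if 1 \<le> i then {(i - 1, j - 1)} else {})"
      by (rule card_Un_le)
    finally have "i < j \<and> 1 \<le> i" using c1 by (auto split: if_splits)
    moreover have "j \<noteq> n" using c2 chains_n_card[of n i] ij by auto
    moreover have "j \<le> n" using P ij by (simp add: GT_P_def)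
    ultimately show "p \<in> {(i, j). 1 \<le> i \<and> i < j \<and> j < n}" using ij by auto
  qed
next
  show "{(i, j). 1 \<le> i \<and> i < j \<and> j < n} \<subseteq> star_elements (GT_P n) (GT_cov n)"
  proof
    fix p assume "p \<in> {(i, j). 1 \<le> i \<and> i < j \<and> j < n}"
    then obtain i j where ij: "p = (i, j)" "1 \<le> i" "i < j" "j < n" by blast
    have P: "p \<in> GT_P n" using ij by (simp add: GT_P_def)
    have sub: "{(Suc i, j), (i - 1, j - 1)} \<subseteq> covering_set (GT_P n) (GT_cov n) p"
    proof -
      have "GT_cov n (i, j) (Suc i, j)" using ij by (intro covU) auto
      moreover have "GT_cov n (i, j) (i - 1, j - 1)"
      proof -
        have e: "(i, j) = (Suc (i - 1), Suc (j - 1))" using ij by auto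
        show ?thesis by (subst e, rule covD) (use ij in auto)
      qed
      ultimately show ?thesis using ij unfolding covering_set_def GT_P_def by auto
    qed
    have fin: "finite (covering_set (GT_P n) (GT_cov n) p)"
      using finite_P unfolding covering_set_def by simp
    have "card {(Suc i, j), (i - 1, j - 1)} = 2" using ij by auto
    then have "card (covering_set (GT_P n) (GT_cov n) p) \<ge> 2"
      using card_mono[OF fin sub] by simp
    moreover have "card (chains_to (GT_P n) (GT_cov n) p) \<ge> 2" using two_chains ij by simp
    ultimately show "p \<in> star_elements (GT_P n) (GT_cov n)" using P unfolding star_elements_def by simp
  qed
qed

lemma regular:
  fixes lam :: "nat \<Rightarrow> nat"
  assumes st: "\<forall>k < n. lam (Suc k) < lam k"
  shows "regular_marked_poset (GT_P n) (GT_cov n) (GT_A n) (GT_mark lam)"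
proof -
  have an: "\<forall>k < n. lam (Suc k) \<le> lam k" using st by (simp add: order_less_imp_le)
  have AP: "GT_A n \<subseteq> GT_P n" unfolding GT_A_def GT_P_def by auto
  have ext: "{x \<in> GT_P n. is_minimal (GT_P n) (GT_cov n) x \<or> is_maximal (GT_P n) (GT_cov n) x} \<subseteq> GT_A n"
  proof
    fix x assume x: "x \<in> {x \<in> GT_P n. is_minimal (GT_P n) (GT_cov n) x \<or> is_maximal (GT_P n) (GT_cov n) x}"
    then have "fst x = 0" using minimal_iff[of n x] maximal_fst[of n x] by auto
    moreover have "snd x \<le> n" using x unfolding GT_P_def by auto
    ultimately show "x \<in> GT_A n" unfolding GT_A_def by (metis (mono_tags, lifting) mem_Collect_eq prod.collapse)
  qed
  have c1: "\<not> (\<exists>a\<in>GT_A n. \<exists>b\<in>GT_A n. GT_cov n a b)"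
  proof
    assume "\<exists>a\<in>GT_A n. \<exists>b\<in>GT_A n. GT_cov n a b"
    then obtain k m where "GT_cov n (0, k) (0, m)" unfolding GT_A_def by auto
    then have "rk (0, m) = rk (0, k) + 1" using cov_inv by blast
    then show False by (simp add: rk_def) presburger
  qed
  have c2: "\<forall>a\<in>GT_A n. \<forall>b\<in>GT_A n. a \<noteq> b \<longrightarrow> GT_mark lam a \<noteq> GT_mark lam b"
  proof (intro ballI impI)
    fix a b assume "a \<in> GT_A n" "b \<in> GT_A n" "a \<noteq> b"
    then obtain k m where km: "a = (0, k)" "b = (0, m)" "k \<le> n" "m \<le> n" "k \<noteq> m"
      unfolding GT_A_def by auto
    show "GT_mark lam a \<noteq> GT_mark lam b"
    proof (cases "k < m")
      case True then show ?thesis using lam_strict[OF st True] km by (simp add: GT_mark_def)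
    next
      case False then have "m < k" using km by simp
      then show ?thesis using lam_strict[OF st, of m k] km by (simp add: GT_mark_def)
    qed
  qed
  have c3: "\<forall>a\<in>GT_A n. \<forall>x\<in>GT_P n - GT_A n. GT_cov n a x \<longrightarrow>
        \<not> (\<exists>b\<in>GT_A n. strict_less (GT_cov n) b x \<and> GT_mark lam a < GT_mark lam b)"
  proof (intro ballI impI notI)
    fix a x assume a: "a \<in> GT_A n" and x: "x \<in> GT_P n - GT_A n" and ax: "GT_cov n a x"
      and "\<exists>b\<in>GT_A n. strict_less (GT_cov n) b x \<and> GT_mark lam a < GT_mark lam b"
    then obtain b where b: "b \<in> GT_A n" "strict_less (GT_cov n) b x" "GT_mark lam a < GT_mark lam b"
      by blast
    obtain j where aj: "a = (0, j)" "j \<le> n" using a unfolding GT_A_def by auto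
    obtain m where bm: "b = (0, m)" "m \<le> n" using b unfolding GT_A_def by auto
    obtain c d where xcd: "x = (c, d)" by fastforce
    have "c \<le> d" using x xcd unfolding GT_P_def by auto
    have ci: "rk x = rk a + 1" "int (snd x) - int (fst x) \<le> int (snd a) - int (fst a)"
      using cov_inv[OF ax] by auto
    have "d \<le> m" using sl_inv[OF b(2)] xcd bm by simp
    moreover have "j \<le> d" using ci xcd aj unfolding rk_def by (simp; arith)
    ultimately have "lam m \<le> lam j" using lam_anti[OF an, of j m] bm by simp
    then show False using b(3) aj bm by (simp add: GT_mark_def)
  qed
  have c4: "\<forall>a\<in>GT_A n. \<forall>x\<in>GT_P n - GT_A n. GT_cov n x a \<longrightarrow>
        \<not> (\<exists>b\<in>GT_A n. strict_less (GT_cov n) x b \<and> GT_mark lam b < GT_mark lam a)"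
  proof (intro ballI impI notI)
    fix a x assume a: "a \<in> GT_A n" and x: "x \<in> GT_P n - GT_A n" and ax: "GT_cov n x a"
      and "\<exists>b\<in>GT_A n. strict_less (GT_cov n) x b \<and> GT_mark lam b < GT_mark lam a"
    then obtain b where b: "b \<in> GT_A n" "strict_less (GT_cov n) x b" "GT_mark lam b < GT_mark lam a"
      by blast
    obtain k where ak: "a = (0, k)" "k \<le> n" using a unfolding GT_A_def by auto
    obtain m where bm: "b = (0, m)" "m \<le> n" using b unfolding GT_A_def by auto
    obtain c d where xcd: "x = (c, d)" by fastforce
    have ci: "rk a = rk x + 1" "snd a \<le> snd x" "int (snd a) - int (fst a) \<le> int (snd x) - int (fst x)"
      using cov_inv[OF ax] by auto
    have "int m \<le> int d - int c" using sl_inv[OF b(2)] xcd bm by simp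
    moreover have "int d - int c \<le> int k" using ci xcd ak unfolding rk_def by (simp; arith)
    ultimately have "lam k \<le> lam m" using lam_anti[OF an, of m k] ak by simp
    then show False using b(3) ak bm by (simp add: GT_mark_def)
  qed
  show ?thesis unfolding regular_marked_poset_def using AP ext c1 c2 c3 c4 by blast
qed

theorem lemma6p2:
  fixes n :: nat and lam :: "nat \<Rightarrow> nat"
  assumes "n \<ge> 1"
    and "\<forall>k < n. lam (Suc k) \<le> lam k"
  shows "((\<forall>k < n. lam (Suc k) < lam k) \<longrightarrow>
            regular_marked_poset (GT_P n) (GT_cov n) (GT_A n) (GT_mark lam))
       \<and> star_elements (GT_P n) (GT_cov n) = {(i, j). 1 \<le> i \<and> i < j \<and> j < n}"
  using regular star_char by blast

end
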